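(* Let $X\in\mathcal L(V)$ be positive semidefinite with $r=\mathrm{rank}(X)$. Then for every irreducible type $\xi$, $A_\xi(X)\preceq r\,B_\xi(X)$ in the Loewner order. In particular, if $P$ is the orthogonal projector onto a $K$-dimensional subspace $\mathcal C\subseteq V$, then $A_\xi(P)\preceq K\,B_\xi(P)$.
   Context: Let $G$ be a group and $V$ a finite-dimensional complex Hilbert space with a unitary representation $\rho$ of $G$; $G$ acts on $\mathcal L(V)$ by conjugation, unitarily for $\langle X_1,X_2\rangle=\mathrm{Tr}(X_1^\dagger X_2)$. Let $\mathcal L(V)=\bigoplus_\xi\mathcal E_\xi$ be the isotypic decomposition, $m_\xi$ the multiplicity and $d_\xi$ the dimension of type $\xi$. Choose an orthogonal decomposition $\mathcal E_\xi=\bigoplus_{\alpha=1}^{m_\xi}\mathcal E_{\xi\alpha}$ into irreducibles, $G$-equivariant isometric isomorphisms $\phi^\xi_{1\alpha}:\mathcal E_{\xi1}\to\mathcal E_{\xi\alpha}$ ($\phi^\xi_{11}=\mathrm{id}$), an orthonormal basis $\{E_i^1\}_{i=1}^{d_\xi}$ of $\mathcal E_{\xi1}$, and put $E_i^\alpha=\phi^\xi_{1\alpha}(E_i^1)$. Matrix-valued enumerators: $[A_\xi(X)]_{\alpha\beta}=\sum_{i=1}^{d_\xi}\mathrm{Tr}(X^\dagger E_i^\beta)\mathrm{Tr}(X(E_i^\alpha)^\dagger)$ and $[B_\xi(X)]_{\alpha\beta}=\sum_{i=1}^{d_\xi}\mathrm{Tr}(X^\dagger(E_i^\alpha)^\dagger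 XE_i^\beta)$. For Hermitian matrices, $A\preceq B$ means $B-A$ is positive semidefinite. *)

theory Defs
  imports "Jordan_Normal_Form.Jordan_Normal_Form" "Jordan_Normal_Form.DL_Rank"
    "Jordan_Normal_Form.Schur_Decomposition" "HOL-Algebra.Group"
begin

text \<open>V = complex n-dimensional Hilbert space C^n with the standard inner product;
  L(V) = complex n x n matrices (carrier_mat n n).\<close>

definition unitary_mat :: "nat \<Rightarrow> complex mat \<Rightarrow> bool" where
  "unitary_mat n U \<longleftrightarrow> U \<in> carrier_mat n n \<and> mat_adjoint U * U = 1\<^sub>m n \<and> U * mat_adjoint U = 1\<^sub>m n"

definition unitary_rep :: "('g, 'b) monoid_scheme \<Rightarrow> nat \<Rightarrow> ('g \<Rightarrow> complex mat) \<Rightarrow> bool" where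
  "unitary_rep G n \<rho> \<longleftrightarrow> group G \<and> (\<forall>g\<in>carrier G. unitary_mat n (\<rho> g)) \<and>
     (\<forall>g\<in>carrier G. \<forall>h\<in>carrier G. \<rho> (g \<otimes>\<^bsub>G\<^esub> h) = \<rho> g * \<rho> h)"

definition mtrace :: "complex mat \<Rightarrow> complex" where
  "mtrace A = (\<Sum>i<dim_row A. A $$ (i, i))"

definition hs :: "complex mat \<Rightarrow> complex mat \<Rightarrow> complex" where
  "hs X Y = mtrace (mat_adjoint X * Y)"

definition conj_act :: "('g \<Rightarrow> complex mat) \<Rightarrow> 'g \<Rightarrow> complex mat \<Rightarrow> complex mat" where
  "conj_act \<rho> g X = \<rho> g * X * mat_adjoint (\<rho> g)"

definition subspace_L :: "nat \<Rightarrow> complex mat set \<Rightarrow> bool" where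
  "subspace_L n W \<longleftrightarrow> W \<subseteq> carrier_mat n n \<and> 0\<^sub>m n n \<in> W \<and>
     (\<forall>X\<in>W. \<forall>Y\<in>W. X + Y \<in> W) \<and> (\<forall>c. \<forall>X\<in>W. c \<cdot>\<^sub>m X \<in> W)"

definition span_L :: "nat \<Rightarrow> complex mat set \<Rightarrow> complex mat set" where
  "span_L n S = \<Inter>{W. subspace_L n W \<and> S \<subseteq> W}"

definition invariant_L :: "('g, 'b) monoid_scheme \<Rightarrow> ('g \<Rightarrow> complex mat) \<Rightarrow> complex mat set \<Rightarrow> bool" where
  "invariant_L G \<rho> W \<longleftrightarrow> (\<forall>g\<in>carrier G. \<forall>X\<in>W. conj_act \<rho> g X \<in> W)"

definition irreducible_L :: "('g, 'b) monoid_scheme \<Rightarrow> nat \<Rightarrow> ('g \<Rightarrow> complex mat) \<Rightarrow> complex mat set \<Rightarrow> bool" where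
  "irreducible_L G n \<rho> W \<longleftrightarrow> subspace_L n W \<and> invariant_L G \<rho> W \<and> W \<noteq> {0\<^sub>m n n} \<and>
     (\<forall>U. subspace_L n U \<and> U \<subseteq> W \<and> invariant_L G \<rho> U \<longrightarrow> U = {0\<^sub>m n n} \<or> U = W)"

definition linear_on_L :: "complex mat set \<Rightarrow> (complex mat \<Rightarrow> complex mat) \<Rightarrow> bool" where
  "linear_on_L W f \<longleftrightarrow> (\<forall>X\<in>W. \<forall>Y\<in>W. f (X + Y) = f X + f Y) \<and> (\<forall>c. \<forall>X\<in>W. f (c \<cdot>\<^sub>m X) = c \<cdot>\<^sub>m f X)"

definition equivariant_on_L :: "('g, 'b) monoid_scheme \<Rightarrow> ('g \<Rightarrow> complex mat) \<Rightarrow> complex mat set \<Rightarrow> (complex mat \<Rightarrow> complex mat) \<Rightarrow> bool" where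
  "equivariant_on_L G \<rho> W f \<longleftrightarrow> (\<forall>g\<in>carrier G. \<forall>X\<in>W. f (conj_act \<rho> g X) = conj_act \<rho> g (f X))"

definition rep_iso_L :: "('g, 'b) monoid_scheme \<Rightarrow> ('g \<Rightarrow> complex mat) \<Rightarrow> complex mat set \<Rightarrow> complex mat set \<Rightarrow> bool" where
  "rep_iso_L G \<rho> W U \<longleftrightarrow> (\<exists>f. linear_on_L W f \<and> bij_betw f W U \<and> equivariant_on_L G \<rho> W f)"

definition isotypic_L :: "('g, 'b) monoid_scheme \<Rightarrow> nat \<Rightarrow> ('g \<Rightarrow> complex mat) \<Rightarrow> complex mat set \<Rightarrow> complex mat set" where
  "isotypic_L G n \<rho> W = span_L n (\<Union>{U. irreducible_L G n \<rho> U \<and> rep_iso_L G \<rho> W U})"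

definition psd_mat :: "nat \<Rightarrow> complex mat \<Rightarrow> bool" where
  "psd_mat k M \<longleftrightarrow> M \<in> carrier_mat k k \<and> mat_adjoint M = M \<and>
     (\<forall>v\<in>carrier_vec k. \<exists>t::real. t \<ge> 0 \<and> conjugate v \<bullet> (M *\<^sub>v v) = complex_of_real t)"

definition loewner_le :: "nat \<Rightarrow> complex mat \<Rightarrow> complex mat \<Rightarrow> bool" where
  "loewner_le k A B \<longleftrightarrow> A \<in> carrier_mat k k \<and> B \<in> carrier_mat k k \<and> psd_mat k (B - A)"

text \<open>Matrix-valued enumerators; indices alpha, beta range over {0..<m} (alpha = 0 is the
  reference copy), i over {0..<d}; Eb alpha i = E_i^alpha.\<close>
definition enumA :: "nat \<Rightarrow> nat \<Rightarrow> (nat \<Rightarrow> nat \<Rightarrow> complex mat) \<Rightarrow> complex mat \<Rightarrow> complex mat" where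
  "enumA m d Eb X = mat m m (\<lambda>(\<alpha>, \<beta>). \<Sum>i<d. mtrace (mat_adjoint X * Eb \<beta> i) * mtrace (X * mat_adjoint (Eb \<alpha> i)))"

definition enumB :: "nat \<Rightarrow> nat \<Rightarrow> (nat \<Rightarrow> nat \<Rightarrow> complex mat) \<Rightarrow> complex mat \<Rightarrow> complex mat" where
  "enumB m d Eb X = mat m m (\<lambda>(\<alpha>, \<beta>). \<Sum>i<d. mtrace (mat_adjoint X * mat_adjoint (Eb \<alpha> i) * X * Eb \<beta> i))"

end

theory Submission
  imports Defs
begin



context vec_space begin
lemma rank_strict:
  assumes A: "A \<in> carrier_mat n nc" and B: "B \<in> carrier_mat n nc'"
    and BA: "set (cols B) \<subseteq> span (set (cols A))"
    and x: "x \<in> set (cols A)" and xB: "x \<notin> span (set (cols B))"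
  shows "rank B < rank A"
proof -
  have cB: "set (cols B) \<subseteq> carrier_vec n" using B cols_dim by blast
  have cA: "set (cols A) \<subseteq> carrier_vec n" using A cols_dim by blast
  have lin_indpt_empty: "lin_indpt {}" unfolding lin_dep_def by auto
  obtain U where U: "maximal U (\<lambda>T. T \<subseteq> set (cols B) \<and> lin_indpt T)" "finite U"
    using maximal_exists_superset[of "set (cols B)" "(\<lambda>T. T \<subseteq> set (cols B) \<and> lin_indpt T)" "{}"]
    using lin_indpt_empty by auto
  have rB: "rank B = card U" using rank_card_indpt[OF B U(1)] .
  have UB: "U \<subseteq> set (cols B)" and Uli: "lin_indpt U" using U(1) unfolding maximal_def by auto
  have Uc: "U \<subseteq> carrier_vec n" using UB cB by auto
  have "span U \<subseteq> span (set (cols B))" using span_is_monotone[OF UB] .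
  hence xU: "x \<notin> span U" using xB by auto
  have xc: "x \<in> carrier_vec n" using x cA by auto
  have xnU: "x \<notin> U" using xU in_own_span[OF Uc] by auto
  have li: "lin_indpt (U \<union> {x})" using lin_dep_iff_in_span[OF Uc Uli xc xnU] xU by auto
  define W where "W = span (set (cols A))"
  have subW: "submodule class_ring W V" unfolding W_def using span_is_submodule[OF cA] by simp
  have UxW: "U \<union> {x} \<subseteq> W" unfolding W_def using UB BA x in_own_span[OF cA] by auto
  have vsW: "vectorspace class_ring (vs W)"
    using subspace_is_vs span_is_subspace[OF cA] unfolding W_def by auto
  have fdW: "vectorspace.fin_dim class_ring (vs W)" unfolding W_def using fin_dim_span_cols[OF A] .
  have liW: "LinearCombinations.module.lin_indpt class_ring (vs W) (U \<union> {x})"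
    using span_li_not_depend(2)[OF UxW subW] li by simp
  have "card (U \<union> {x}) \<le> vectorspace.dim class_ring (vs W)"
    using vectorspace.li_le_dim(2)[OF vsW fdW _ liW] UxW by simp
  moreover have "card (U \<union> {x}) = card U + 1" using xnU U(2) by simp
  moreover have "rank A = vectorspace.dim class_ring (vs W)" unfolding rank_def W_def by simp
  ultimately show ?thesis using rB by simp
qed
end


definition qf :: "nat \<Rightarrow> complex mat \<Rightarrow> (nat \<Rightarrow> complex) \<Rightarrow> (nat \<Rightarrow> complex) \<Rightarrow> complex" where
  "qf n X y u = (\<Sum>a<n. \<Sum>b<n. cnj (y a) * X $$ (a,b) * u b)"

definition herm :: "nat \<Rightarrow> complex mat \<Rightarrow> bool" where
  "herm n X \<longleftrightarrow> (\<forall>a<n. \<forall>b<n. X $$ (b,a) = cnj (X $$ (a,b)))"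

definition psdf :: "nat \<Rightarrow> complex mat \<Rightarrow> bool" where
  "psdf n X \<longleftrightarrow> herm n X \<and> (\<forall>y. Im (qf n X y y) = 0 \<and> Re (qf n X y y) \<ge> 0)"

lemma qf_expand:
  "qf n X (\<lambda>a. y a + s * u a) (\<lambda>a. y a + s * u a) =
   qf n X y y + s * qf n X y u + cnj s * qf n X u y + s * cnj s * qf n X u u"
  unfolding qf_def by (simp add: algebra_simps sum.distrib sum_distrib_left)

lemma qf_swap: assumes "herm n X" shows "qf n X u y = cnj (qf n X y u)"
proof -
  have "cnj (qf n X y u) = (\<Sum>a<n. \<Sum>b<n. y a * cnj (X$$(a,b)) * cnj (u b))" by (simp add: qf_def)
  also have "\<dots> = (\<Sum>a<n. \<Sum>b<n. cnj(u b) * X$$(b,a) * y a)"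
  proof (intro sum.cong refl)
    fix a b assume "a \<in> {..<n}" "b \<in> {..<n}"
    hence "X$$(b,a) = cnj (X$$(a,b))" using assms unfolding herm_def by blast
    thus "y a * cnj (X$$(a,b)) * cnj (u b) = cnj(u b) * X$$(b,a) * y a" by (simp add: ac_simps)
  qed
  also have "\<dots> = qf n X u y" unfolding qf_def by (rule sum.swap)
  finally show ?thesis by simp
qed

lemma qf_CS:
  assumes "psdf n X"
  shows "(cmod (qf n X y u))^2 \<le> Re (qf n X y y) * Re (qf n X u u)"
proof -
  define b where "b = qf n X y u"
  define p where "p = Re (qf n X y y)"
  define q where "q = Re (qf n X u u)"
  have h: "herm n X" using assms by (simp add: psdf_def)
  have p0: "p \<ge> 0" and q0: "q \<ge> 0" using assms by (auto simp: psdf_def p_def q_def)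
  have qq: "qf n X u u = complex_of_real q" using assms unfolding psdf_def q_def
    by (simp add: complex_eq_iff)
  have bb: "b * cnj b = complex_of_real ((cmod b)^2)" using complex_norm_square[of b] by simp
  have key: "p - 2 * t * (cmod b)^2 + t^2 * (cmod b)^2 * q \<ge> 0" for t :: real
  proof -
    define s where "s = - complex_of_real t * cnj b"
    have ge: "Re (qf n X (\<lambda>a. y a + s * u a) (\<lambda>a. y a + s * u a)) \<ge> 0"
      using assms by (simp add: psdf_def)
    have e1: "qf n X (\<lambda>a. y a + s * u a) (\<lambda>a. y a + s * u a) =
        qf n X y y + (s * b + cnj s * cnj b + s * cnj s * complex_of_real q)"
      by (simp add: qf_expand qf_swap[OF h, of u y] b_def qq)
    have e2: "s * b + cnj s * cnj b + s * cnj s * complex_of_real q =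
        complex_of_real (- 2 * t * (cmod b)^2 + t^2 * (cmod b)^2 * q)"
    proof -
      have "s * b = - complex_of_real t * (b * cnj b)" by (simp add: s_def algebra_simps)
      moreover have "cnj s * cnj b = - complex_of_real t * (b * cnj b)" by (simp add: s_def algebra_simps)
      moreover have "s * cnj s = complex_of_real (t^2) * (b * cnj b)" by (simp add: s_def algebra_simps power2_eq_square)
      ultimately show ?thesis unfolding bb by (simp add: algebra_simps power2_eq_square)
    qed
    have "Re (qf n X (\<lambda>a. y a + s * u a) (\<lambda>a. y a + s * u a)) = p + (- 2 * t * (cmod b)^2 + t^2 * (cmod b)^2 * q)"
      unfolding e1 e2 by (simp add: p_def)
    with ge show ?thesis by simp
  qed
  show ?thesis
  proof (cases "q = 0")
    case True
    show ?thesis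
    proof (rule ccontr)
      assume "\<not> ?thesis"
      hence "\<not> (cmod b)^2 \<le> p * q" by (simp add: b_def p_def q_def)
      hence bpos: "(cmod b)^2 > 0" using True by simp
      have "p - 2 * ((p + 1) / (2 * (cmod b)^2)) * (cmod b)^2 \<ge> 0"
        using key[of "(p + 1) / (2 * (cmod b)^2)"] True by simp
      with bpos show False by (simp add: field_simps)
    qed
  next
    case False
    hence qpos: "q > 0" using q0 by simp
    have "p - 2 * (1/q) * (cmod b)^2 + (1/q)^2 * (cmod b)^2 * q \<ge> 0" using key[of "1/q"] .
    hence "p - (cmod b)^2 / q \<ge> 0" using qpos by (simp add: field_simps power2_eq_square)
    hence "(cmod b)^2 \<le> p * q" using qpos by (simp add: field_simps)
    thus ?thesis by (simp add: b_def p_def q_def)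
  qed
qed





lemma adjoint_dims[simp]: "dim_row (mat_adjoint A) = dim_col A" "dim_col (mat_adjoint A) = dim_row A"
  unfolding mat_adjoint_def by simp_all

lemma adjoint_index[simp]: "i < dim_col A \<Longrightarrow> j < dim_row A \<Longrightarrow> mat_adjoint A $$ (i,j) = cnj (A $$ (j,i))"
  unfolding mat_adjoint_def by (simp add: mat_of_rows_def)

lemma adjoint_carrier[simp]: "A \<in> carrier_mat n m \<Longrightarrow> mat_adjoint A \<in> carrier_mat m n"
  using adjoint_dims[of A] unfolding carrier_mat_def by auto

lemma qf_vec:
  assumes "v \<in> carrier_vec n" "X \<in> carrier_mat n n"
  shows "conjugate v \<bullet> (X *\<^sub>v v) = qf n X (($) v) (($) v)"
  using assms unfolding qf_def scalar_prod_def
  by (auto simp: sum_distrib_left atLeast0LessThan ac_simps scalar_prod_def intro!: sum.cong)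

lemma qf_cong:
  assumes "\<And>a. a < n \<Longrightarrow> y a = y' a" "\<And>a. a < n \<Longrightarrow> u a = u' a"
  shows "qf n X y u = qf n X y' u'"
  unfolding qf_def using assms by (intro sum.cong) auto

lemma psd_mat_psdf:
  assumes "psd_mat n X"
  shows "psdf n X" "X \<in> carrier_mat n n"
proof -
  show X: "X \<in> carrier_mat n n" using assms by (simp add: psd_mat_def)
  have adj: "mat_adjoint X = X" using assms by (simp add: psd_mat_def)
  have "herm n X" unfolding herm_def
  proof (intro allI impI)
    fix a b assume "a < n" "b < n"
    hence "mat_adjoint X $$ (b,a) = cnj (X $$ (a,b))" using X by simp
    thus "X $$ (b,a) = cnj (X $$ (a,b))" using adj by simp
  qed
  moreover have "Im (qf n X y y) = 0 \<and> Re (qf n X y y) \<ge> 0" for y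
  proof -
    have v: "vec n y \<in> carrier_vec n" by simp
    obtain t :: real where "t \<ge> 0" "conjugate (vec n y) \<bullet> (X *\<^sub>v vec n y) = complex_of_real t"
      using assms v unfolding psd_mat_def by blast
    moreover have "qf n X y y = conjugate (vec n y) \<bullet> (X *\<^sub>v vec n y)"
      by (subst qf_vec[OF v X]) (rule qf_cong, auto)
    ultimately show ?thesis by simp
  qed
  ultimately show "psdf n X" by (simp add: psdf_def)
qed

definition ind :: "nat \<Rightarrow> nat \<Rightarrow> complex" where "ind a = (\<lambda>c. if c = a then 1 else 0)"

lemma qf_ind_right: assumes "b < n" shows "qf n X y (ind b) = (\<Sum>a<n. cnj (y a) * X $$ (a,b))"
proof -
  have "\<And>a bb. cnj (y a) * X $$ (a, bb) * (if bb = b then 1 else 0) = (if bb = b then cnj (y a) * X $$ (a, b) else 0)"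
    by simp
  thus ?thesis using assms unfolding qf_def ind_def by (simp add: sum.delta)
qed

lemma qf_ind: assumes "a < n" "b < n" shows "qf n X (ind a) (ind b) = X $$ (a,b)"
proof -
  have "\<And>aa. cnj (ind a aa) * X $$ (aa, b) = (if aa = a then X $$ (a, b) else 0)"
    by (simp add: ind_def)
  thus ?thesis using assms by (simp add: qf_ind_right sum.delta)
qed


lemma decomp:
  assumes "X \<in> carrier_mat n n" "psdf n X"
  shows "\<exists>K w. K \<le> vec_space.rank n X \<and> (\<forall>a<n. \<forall>b<n. X $$ (a,b) = (\<Sum>k<K. w k a * cnj (w k b)))"
  using assms
proof (induction "vec_space.rank n X" arbitrary: X rule: less_induct)
  case less
  note X = less.prems(1) and P = less.prems(2)
  have h: "herm n X" using P unfolding psdf_def by blast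
  have hE: "X $$ (b,a) = cnj (X $$ (a,b))" if "a < n" "b < n" for a b
    using h that unfolding herm_def by blast
  show ?case
  proof (cases "\<forall>a<n. \<forall>b<n. X $$ (a,b) = 0")
    case True
    show ?thesis by (rule exI[of _ 0], rule exI[of _ "\<lambda>_ _. 0"]) (use True in simp)
  next
    case False
    then obtain a0 b0 where ab: "a0 < n" "b0 < n" "X $$ (a0,b0) \<noteq> 0" by blast
    have "\<exists>i<n. X $$ (i,i) \<noteq> 0"
    proof (rule ccontr)
      assume "\<not> ?thesis"
      hence z: "X$$(a0,a0) = 0" "X$$(b0,b0) = 0" using ab by auto
      have "(cmod (qf n X (ind a0) (ind b0)))^2 \<le> Re (qf n X (ind a0) (ind a0)) * Re (qf n X (ind b0) (ind b0))"
        by (rule qf_CS[OF P])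
      hence "(cmod (X$$(a0,b0)))^2 \<le> 0" using ab z by (simp add: qf_ind)
      thus False using ab(3) by simp
    qed
    then obtain i where i: "i < n" "X$$(i,i) \<noteq> 0" by blast
    define d where "d = Re (X$$(i,i))"
    have "Im (qf n X (ind i) (ind i)) = 0 \<and> Re (qf n X (ind i) (ind i)) \<ge> 0"
      using P unfolding psdf_def by blast
    hence "Im (X$$(i,i)) = 0" "d \<ge> 0" using i by (simp_all add: qf_ind d_def)
    hence Xii: "X$$(i,i) = complex_of_real d" by (simp add: complex_eq_iff d_def)
    with i \<open>d \<ge> 0\<close> have dpos: "d > 0" by (cases "d = 0") auto
    define sd where "sd = complex_of_real (sqrt d)"
    have sd2: "sd * sd = complex_of_real d" using dpos unfolding sd_def of_real_mult[symmetric]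
      by simp
    have sd0: "sd \<noteq> 0" using dpos by (simp add: sd_def)
    have sdc: "cnj sd = sd" by (simp add: sd_def)
    define w where "w a = X$$(a,i) / sd" for a
    define X' where "X' = mat n n (\<lambda>(a,b). X$$(a,b) - w a * cnj (w b))"
    have X'c: "X' \<in> carrier_mat n n" by (simp add: X'_def)
    have X'e: "X'$$(a,b) = X$$(a,b) - w a * cnj (w b)" if "a < n" "b < n" for a b
      using that by (simp add: X'_def)
    have wprod: "w a * cnj (w b) = X$$(a,i) * X$$(i,b) / complex_of_real d" if "a < n" "b < n" for a b
    proof -
      have "cnj (X$$(b,i)) = X$$(i,b)" using hE[of b i] that i by simp
      thus ?thesis by (simp add: w_def sdc sd2[symmetric])
    qed
    have herm': "herm n X'" unfolding herm_def
    proof (intro allI impI)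
      fix a b assume ab': "a < n" "b < n"
      show "X' $$ (b,a) = cnj (X' $$ (a,b))"
        using ab' i by (simp add: X'e wprod hE[of a b] hE[of a i] hE[of i b])
    qed
    define c where "c y = (\<Sum>a<n. cnj (y a) * X$$(a,i))" for y
    have qf': "qf n X' y y = qf n X y y - c y * cnj (c y) / complex_of_real d" for y
    proof -
      have s1: "(\<Sum>a<n. \<Sum>b<n. cnj (y a) * (w a * cnj (w b)) * y b) = (\<Sum>a<n. cnj (y a) * w a) * (\<Sum>b<n. cnj (w b) * y b)"
        by (simp add: sum_product ac_simps)
      have s2: "(\<Sum>a<n. cnj (y a) * w a) = c y / sd"
        by (simp add: w_def sum_divide_distrib c_def)
      have s3: "(\<Sum>b<n. cnj (w b) * y b) = cnj (c y) / sd"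
        by (simp add: w_def c_def sum_divide_distrib sdc ac_simps)
      have "qf n X' y y = (\<Sum>a<n. \<Sum>b<n. cnj (y a) * X$$(a,b) * y b - cnj (y a) * (w a * cnj (w b)) * y b)"
        unfolding qf_def by (intro sum.cong refl) (simp add: X'e algebra_simps)
      also have "\<dots> = qf n X y y - (\<Sum>a<n. \<Sum>b<n. cnj (y a) * (w a * cnj (w b)) * y b)"
        unfolding qf_def by (simp add: sum_subtractf)
      also have "\<dots> = qf n X y y - c y * cnj (c y) / complex_of_real d"
        unfolding s1 s2 s3 by (simp add: sd2[symmetric])
      finally show ?thesis .
    qed
    have psdf': "psdf n X'" unfolding psdf_def
    proof (intro conjI allI herm')
      fix y
      have cy: "c y = qf n X y (ind i)" using i by (simp add: qf_ind_right c_def)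
      have CS: "(cmod (c y))^2 \<le> Re (qf n X y y) * d"
        using qf_CS[OF P, of y "ind i"] i by (simp add: cy qf_ind d_def)
      have cc: "c y * cnj (c y) = complex_of_real ((cmod (c y))^2)"
        using complex_norm_square[of "c y"] by simp
      have q0: "Im (qf n X y y) = 0" using P unfolding psdf_def by blast
      have e: "qf n X' y y = qf n X y y - complex_of_real ((cmod (c y))^2 / d)"
        unfolding qf' cc by simp
      show "Im (qf n X' y y) = 0" unfolding e using q0 by simp
      have "(cmod (c y))^2 / d \<le> Re (qf n X y y)" using CS dpos by (simp add: divide_le_eq mult.commute)
      thus "Re (qf n X' y y) \<ge> 0" unfolding e by simp
    qed
    have rank: "vec_space.rank n X' < vec_space.rank n X"
    proof -
      interpret vs: vec_space "TYPE(complex)" n .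
      have cX: "set (cols X) \<subseteq> carrier_vec n" using X cols_dim by blast
      have cX': "set (cols X') \<subseteq> carrier_vec n" using X'c cols_dim by blast
      have colin: "col X j \<in> vs.span (set (cols X))" if "j < n" for j
      proof -
        have "col X j \<in> set (cols X)" using that X by (simp add: cols_def)
        thus ?thesis using vs.in_own_span[OF cX] by blast
      qed
      have sub: "submodule class_ring (vs.span (set (cols X))) vs.V"
        by (rule vs.span_is_submodule[OF cX])
      have BA: "set (cols X') \<subseteq> vs.span (set (cols X))"
      proof
        fix v assume "v \<in> set (cols X')"
        then obtain j where j: "j < n" "v = col X' j" using X'c by (auto simp: cols_def)
        have "v = col X j + (- cnj (w j) / sd) \<cdot>\<^sub>v col X i"
          using j i X X'c by (intro eq_vecI) (auto simp: X'e w_def sdc ac_simps)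
        moreover have "(- cnj (w j) / sd) \<cdot>\<^sub>v col X i \<in> vs.span (set (cols X))"
          using submodule.smult_closed[OF sub, of "- cnj (w j) / sd" "col X i"] colin[OF i(1)]
          by (simp add: module_vec_simps class_ring_simps)
        ultimately show "v \<in> vs.span (set (cols X))"
          using submodule.m_closed[OF sub, of "col X j"] colin[OF j(1)] by (simp add: module_vec_simps)
      qed
      have xin: "col X i \<in> set (cols X)" using i X by (simp add: cols_def)
      have zero_i: "v $ i = 0" if vin: "v \<in> set (cols X')" for v
      proof -
        obtain j where j: "j < n" "v = col X' j" using vin X'c by (auto simp: cols_def)
        have "X$$(i,j) - X$$(i,i) * X$$(i,j) / complex_of_real d = 0"
          using dpos by (simp add: Xii)
        thus ?thesis using j i X'c by (simp add: X'e wprod)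
      qed
      have xnot: "col X i \<notin> vs.span (set (cols X'))"
      proof
        assume "col X i \<in> vs.span (set (cols X'))"
        then obtain a where la: "vs.lincomb a (set (cols X')) = col X i"
          using vs.finite_in_span[OF _ cX'] by blast
        have "col X i $ i = (\<Sum>v\<in>set (cols X'). a v * v $ i)"
          unfolding la[symmetric] by (rule vs.lincomb_index[OF i(1) cX'])
        also have "\<dots> = 0" by (intro sum.neutral) (simp add: zero_i)
        finally show False using i X by simp
      qed
      show ?thesis by (rule vs.rank_strict[OF X X'c BA xin xnot])
    qed
    obtain K w' where K: "K \<le> vec_space.rank n X'"
      and dec: "\<forall>a<n. \<forall>b<n. X' $$ (a,b) = (\<Sum>k<K. w' k a * cnj (w' k b))"
      using less.hyps[OF rank X'c psdf'] by blast
    define w'' where "w'' k = (if k < K then w' k else w)" for k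
    show ?thesis
    proof (intro exI conjI allI impI)
      show "Suc K \<le> vec_space.rank n X" using K rank by simp
      fix a b assume ab': "a < n" "b < n"
      have "X $$ (a,b) = X' $$ (a,b) + w a * cnj (w b)" using ab' by (simp add: X'e)
      also have "\<dots> = (\<Sum>k<Suc K. w'' k a * cnj (w'' k b))"
        using dec ab' by (simp add: w''_def)
      finally show "X $$ (a,b) = (\<Sum>k<Suc K. w'' k a * cnj (w'' k b))" .
    qed
  qed
qed



lemma sq_sum_le: "(\<Sum>k<K. x k)^2 \<le> real K * (\<Sum>k<K. (x k)^2)" for x :: "nat \<Rightarrow> real"
proof -
  have "0 \<le> (\<Sum>j<K. \<Sum>k<K. (x j - x k)^2)" by (intro sum_nonneg) simp
  also have "\<dots> = 2 * (real K * (\<Sum>k<K. (x k)^2)) - 2 * (\<Sum>k<K. x k)^2"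
    by (simp add: power2_diff sum.distrib sum_subtractf sum_distrib_left sum_distrib_right power2_eq_square algebra_simps)
  finally show ?thesis by simp
qed

definition Lf :: "nat \<Rightarrow> complex mat \<Rightarrow> (nat \<Rightarrow> nat \<Rightarrow> complex) \<Rightarrow> complex" where
  "Lf n X G = (\<Sum>a<n. \<Sum>b<n. X $$ (a,b) * cnj (G a b))"

definition Qf :: "nat \<Rightarrow> complex mat \<Rightarrow> (nat \<Rightarrow> nat \<Rightarrow> complex) \<Rightarrow> (nat \<Rightarrow> nat \<Rightarrow> complex) \<Rightarrow> complex" where
  "Qf n X G H = (\<Sum>a<n. \<Sum>b<n. \<Sum>c<n. \<Sum>d<n. X $$ (a,b) * cnj (G c b) * X $$ (c,d) * H d a)"

lemma Qf_split: "Qf n X G H = (\<Sum>a<n. \<Sum>c<n. (\<Sum>b<n. X $$ (a,b) * cnj (G c b)) * (\<Sum>d<n. X $$ (c,d) * H d a))"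
proof -
  have "Qf n X G H = (\<Sum>a<n. \<Sum>b<n. \<Sum>c<n. (X $$ (a,b) * cnj (G c b)) * (\<Sum>d<n. X $$ (c,d) * H d a))"
    unfolding Qf_def by (simp add: sum_distrib_left mult.assoc)
  also have "\<dots> = (\<Sum>a<n. \<Sum>c<n. \<Sum>b<n. (X $$ (a,b) * cnj (G c b)) * (\<Sum>d<n. X $$ (c,d) * H d a))"
    by (rule sum.cong[OF refl], rule sum.swap)
  also have "\<dots> = (\<Sum>a<n. \<Sum>c<n. (\<Sum>b<n. X $$ (a,b) * cnj (G c b)) * (\<Sum>d<n. X $$ (c,d) * H d a))"
    by (simp add: sum_distrib_right)
  finally show ?thesis .
qed

lemma swap4: "(\<Sum>a\<in>A. \<Sum>c\<in>C. \<Sum>k\<in>P. \<Sum>l\<in>R. f a c k l) = (\<Sum>k\<in>P. \<Sum>l\<in>R. \<Sum>a\<in>A. \<Sum>c\<in>C. f a c k l)"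
proof -
  have "(\<Sum>a\<in>A. \<Sum>c\<in>C. \<Sum>k\<in>P. \<Sum>l\<in>R. f a c k l) = (\<Sum>a\<in>A. \<Sum>k\<in>P. \<Sum>c\<in>C. \<Sum>l\<in>R. f a c k l)"
    by (rule sum.cong[OF refl], rule sum.swap)
  also have "\<dots> = (\<Sum>a\<in>A. \<Sum>k\<in>P. \<Sum>l\<in>R. \<Sum>c\<in>C. f a c k l)"
    by (intro sum.cong refl, rule sum.swap)
  also have "\<dots> = (\<Sum>k\<in>P. \<Sum>a\<in>A. \<Sum>l\<in>R. \<Sum>c\<in>C. f a c k l)"
    by (rule sum.swap)
  also have "\<dots> = (\<Sum>k\<in>P. \<Sum>l\<in>R. \<Sum>a\<in>A. \<Sum>c\<in>C. f a c k l)"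
    by (rule sum.cong[OF refl], rule sum.swap)
  finally show ?thesis .
qed

lemma core:
  assumes dec: "\<forall>a<n. \<forall>b<n. X $$ (a,b) = (\<Sum>k<K. w k a * cnj (w k b))"
  shows "Im (Qf n X G G) = 0" "Re (Qf n X G G) \<ge> 0" "(cmod (Lf n X G))^2 \<le> real K * Re (Qf n X G G)"
proof -
  define h where "h k c = (\<Sum>b<n. w k b * G c b)" for k c
  define g where "g l a = (\<Sum>d<n. cnj (w l d) * G d a)" for l a
  define cc where "cc l k = (\<Sum>a<n. w k a * g l a)" for l k
  have Z: "(\<Sum>b<n. X $$ (a,b) * cnj (G c b)) = (\<Sum>k<K. w k a * cnj (h k c))" if "a < n" for a c
  proof -
    have "(\<Sum>b<n. X $$ (a,b) * cnj (G c b)) = (\<Sum>b<n. \<Sum>k<K. w k a * cnj (w k b) * cnj (G c b))"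
      using dec that by (simp add: sum_distrib_right)
    also have "\<dots> = (\<Sum>k<K. \<Sum>b<n. w k a * cnj (w k b) * cnj (G c b))" by (rule sum.swap)
    also have "\<dots> = (\<Sum>k<K. w k a * cnj (h k c))"
      by (simp add: h_def sum_distrib_left mult.assoc)
    finally show ?thesis .
  qed
  have Y: "(\<Sum>d<n. X $$ (c,d) * G d a) = (\<Sum>l<K. w l c * g l a)" if "c < n" for a c
  proof -
    have "(\<Sum>d<n. X $$ (c,d) * G d a) = (\<Sum>d<n. \<Sum>l<K. w l c * cnj (w l d) * G d a)"
      using dec that by (simp add: sum_distrib_right)
    also have "\<dots> = (\<Sum>l<K. \<Sum>d<n. w l c * cnj (w l d) * G d a)" by (rule sum.swap)
    also have "\<dots> = (\<Sum>l<K. w l c * g l a)"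
      by (simp add: g_def sum_distrib_left mult.assoc)
    finally show ?thesis .
  qed
  have C: "(\<Sum>c<n. cnj (h k c) * w l c) = cnj (cc l k)" for k l
  proof -
    have "(\<Sum>c<n. cnj (h k c) * w l c) = (\<Sum>c<n. \<Sum>b<n. cnj (w k b) * cnj (G c b) * w l c)"
      by (simp add: h_def sum_distrib_right)
    also have "\<dots> = (\<Sum>b<n. \<Sum>c<n. cnj (w k b) * cnj (G c b) * w l c)" by (rule sum.swap)
    also have "\<dots> = cnj (cc l k)"
      by (simp add: cc_def g_def sum_distrib_left ac_simps)
    finally show ?thesis .
  qed
  have Q: "Qf n X G G = (\<Sum>k<K. \<Sum>l<K. cc l k * cnj (cc l k))"
  proof -
    have "Qf n X G G = (\<Sum>a<n. \<Sum>c<n. (\<Sum>k<K. w k a * cnj (h k c)) * (\<Sum>l<K. w l c * g l a))"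
      unfolding Qf_split by (intro sum.cong refl) (simp add: Z Y)
    also have "\<dots> = (\<Sum>a<n. \<Sum>c<n. \<Sum>k<K. \<Sum>l<K. (w k a * g l a) * (cnj (h k c) * w l c))"
      by (simp only: sum_product) (simp add: ac_simps)
    also have "\<dots> = (\<Sum>k<K. \<Sum>l<K. \<Sum>a<n. \<Sum>c<n. (w k a * g l a) * (cnj (h k c) * w l c))"
      by (rule swap4)
    also have "\<dots> = (\<Sum>k<K. \<Sum>l<K. cc l k * cnj (cc l k))"
      by (simp add: sum_product[symmetric] C cc_def)
    finally show ?thesis .
  qed
  have L: "Lf n X G = (\<Sum>k<K. cnj (cc k k))"
  proof -
    have "Lf n X G = (\<Sum>a<n. \<Sum>k<K. w k a * cnj (h k a))"
      unfolding Lf_def by (rule sum.cong[OF refl], rule Z) simp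
    also have "\<dots> = (\<Sum>k<K. \<Sum>a<n. cnj (h k a) * w k a)" by (subst sum.swap) (simp add: ac_simps)
    also have "\<dots> = (\<Sum>k<K. cnj (cc k k))" by (simp add: C)
    finally show ?thesis .
  qed
  have nsq: "z * cnj z = complex_of_real ((cmod z)^2)" for z
    using complex_norm_square[of z] by simp
  have Qr: "Qf n X G G = complex_of_real (\<Sum>k<K. \<Sum>l<K. (cmod (cc l k))^2)"
    unfolding Q nsq by simp
  show "Im (Qf n X G G) = 0" unfolding Qr by simp
  show "Re (Qf n X G G) \<ge> 0" unfolding Qr by (simp add: sum_nonneg)
  have "cmod (Lf n X G) \<le> (\<Sum>k<K. cmod (cc k k))"
    unfolding L using norm_sum[of "\<lambda>k. cnj (cc k k)" "{..<K}"] by simp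
  hence "(cmod (Lf n X G))^2 \<le> (\<Sum>k<K. cmod (cc k k))^2"
    by (simp add: power_mono)
  also have "\<dots> \<le> real K * (\<Sum>k<K. (cmod (cc k k))^2)" by (rule sq_sum_le)
  also have "(\<Sum>k<K. (cmod (cc k k))^2) \<le> (\<Sum>k<K. \<Sum>l<K. (cmod (cc l k))^2)"
  proof (intro sum_mono)
    fix k assume "k \<in> {..<K}"
    thus "(cmod (cc k k))^2 \<le> (\<Sum>l<K. (cmod (cc l k))^2)"
      using member_le_sum[of k "{..<K}" "\<lambda>l. (cmod (cc l k))^2"] by simp
  qed
  hence "real K * (\<Sum>k<K. (cmod (cc k k))^2) \<le> real K * Re (Qf n X G G)"
    unfolding Qr by (intro mult_left_mono) simp_all
  finally show "(cmod (Lf n X G))^2 \<le> real K * Re (Qf n X G G)" .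
qed




lemma tr_XEadj:
  assumes X: "X \<in> carrier_mat n n" and E: "E \<in> carrier_mat n n"
  shows "mtrace (X * mat_adjoint E) = Lf n X (\<lambda>a b. E $$ (a,b))"
  using X E unfolding mtrace_def Lf_def
  by (auto simp: scalar_prod_def atLeast0LessThan intro!: sum.cong)

lemma tr_XadjE:
  assumes X: "X \<in> carrier_mat n n" and E: "E \<in> carrier_mat n n"
  shows "mtrace (mat_adjoint X * E) = cnj (Lf n X (\<lambda>a b. E $$ (a,b)))"
proof -
  have "mtrace (mat_adjoint X * E) = (\<Sum>a<n. \<Sum>b<n. cnj (X $$ (b,a)) * E $$ (b,a))"
    using X E unfolding mtrace_def by (auto simp: scalar_prod_def atLeast0LessThan intro!: sum.cong)
  also have "\<dots> = (\<Sum>b<n. \<Sum>a<n. cnj (X $$ (b,a)) * E $$ (b,a))" by (rule sum.swap)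
  also have "\<dots> = cnj (Lf n X (\<lambda>a b. E $$ (a,b)))" unfolding Lf_def by simp
  finally show ?thesis .
qed

lemma mult_idx:
  assumes "A \<in> carrier_mat r n" "B \<in> carrier_mat n c" "i < r" "j < c"
  shows "(A * B) $$ (i,j) = (\<Sum>k<n. A $$ (i,k) * B $$ (k,j))"
  using assms by (simp add: scalar_prod_def atLeast0LessThan)

lemma tr_B:
  assumes X: "X \<in> carrier_mat n n" and E1: "E1 \<in> carrier_mat n n" and E2: "E2 \<in> carrier_mat n n"
    and h: "mat_adjoint X = X"
  shows "mtrace (mat_adjoint X * mat_adjoint E1 * X * E2) = Qf n X (\<lambda>a b. E1 $$ (a,b)) (\<lambda>a b. E2 $$ (a,b))"
proof -
  define Z where "Z a c = (\<Sum>b<n. X $$ (a,b) * cnj (E1 $$ (c,b)))" for a c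
  have aX: "mat_adjoint X \<in> carrier_mat n n" and aE: "mat_adjoint E1 \<in> carrier_mat n n"
    using adjoint_carrier[OF X] adjoint_carrier[OF E1] .
  have M1: "(mat_adjoint X * mat_adjoint E1) $$ (a,c) = Z a c" if ac: "a < n" "c < n" for a c
  proof -
    have "(mat_adjoint X * mat_adjoint E1) $$ (a,c) = (\<Sum>b<n. mat_adjoint X $$ (a,b) * mat_adjoint E1 $$ (b,c))"
      by (rule mult_idx[OF aX aE ac])
    also have "\<dots> = Z a c" unfolding Z_def
    proof (rule sum.cong[OF refl])
      fix b assume "b \<in> {..<n}"
      hence "mat_adjoint E1 $$ (b,c) = cnj (E1 $$ (c,b))" using E1 ac by simp
      moreover have "mat_adjoint X $$ (a,b) = X $$ (a,b)" using h by simp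
      ultimately show "mat_adjoint X $$ (a,b) * mat_adjoint E1 $$ (b,c) = X $$ (a,b) * cnj (E1 $$ (c,b))" by simp
    qed
    finally show ?thesis .
  qed
  have M1c: "mat_adjoint X * mat_adjoint E1 \<in> carrier_mat n n" by (rule mult_carrier_mat[OF aX aE])
  have M2: "(mat_adjoint X * mat_adjoint E1 * X) $$ (a,d) = (\<Sum>c<n. Z a c * X $$ (c,d))" if ad: "a < n" "d < n" for a d
    unfolding mult_idx[OF M1c X ad] using ad by (intro sum.cong refl) (simp add: M1)
  have M2c: "mat_adjoint X * mat_adjoint E1 * X \<in> carrier_mat n n" by (rule mult_carrier_mat[OF M1c X])
  have "mtrace (mat_adjoint X * mat_adjoint E1 * X * E2) = (\<Sum>a<n. (mat_adjoint X * mat_adjoint E1 * X * E2) $$ (a,a))"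
    unfolding mtrace_def using M2c E2 X by simp
  also have "\<dots> = (\<Sum>a<n. \<Sum>d<n. (\<Sum>c<n. Z a c * X $$ (c,d)) * E2 $$ (d,a))"
  proof (rule sum.cong[OF refl])
    fix a assume "a \<in> {..<n}"
    hence a: "a < n" by simp
    show "(mat_adjoint X * mat_adjoint E1 * X * E2) $$ (a,a) = (\<Sum>d<n. (\<Sum>c<n. Z a c * X $$ (c,d)) * E2 $$ (d,a))"
      unfolding mult_idx[OF M2c E2 a a] using a by (intro sum.cong refl) (simp add: M2)
  qed
  also have "\<dots> = (\<Sum>a<n. \<Sum>d<n. \<Sum>c<n. Z a c * (X $$ (c,d) * E2 $$ (d,a)))"
    by (simp add: sum_distrib_right mult.assoc)
  also have "\<dots> = (\<Sum>a<n. \<Sum>c<n. \<Sum>d<n. Z a c * (X $$ (c,d) * E2 $$ (d,a)))"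
    by (rule sum.cong[OF refl], rule sum.swap)
  also have "\<dots> = Qf n X (\<lambda>a b. E1 $$ (a,b)) (\<lambda>a b. E2 $$ (a,b))"
    unfolding Qf_split Z_def by (simp add: sum_distrib_left)
  finally show ?thesis .
qed

lemma Lf_lin:
  "Lf n X (\<lambda>a b. \<Sum>\<alpha><m. y \<alpha> * F \<alpha> a b) = (\<Sum>\<alpha><m. cnj (y \<alpha>) * Lf n X (F \<alpha>))"
proof -
  have "Lf n X (\<lambda>a b. \<Sum>\<alpha><m. y \<alpha> * F \<alpha> a b) = (\<Sum>a<n. \<Sum>b<n. \<Sum>\<alpha><m. cnj (y \<alpha>) * (X $$ (a,b) * cnj (F \<alpha> a b)))"
    unfolding Lf_def by (simp add: sum_distrib_left ac_simps)
  also have "\<dots> = (\<Sum>a<n. \<Sum>\<alpha><m. \<Sum>b<n. cnj (y \<alpha>) * (X $$ (a,b) * cnj (F \<alpha> a b)))"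
    by (rule sum.cong[OF refl], rule sum.swap)
  also have "\<dots> = (\<Sum>\<alpha><m. \<Sum>a<n. \<Sum>b<n. cnj (y \<alpha>) * (X $$ (a,b) * cnj (F \<alpha> a b)))"
    by (rule sum.swap)
  also have "\<dots> = (\<Sum>\<alpha><m. cnj (y \<alpha>) * Lf n X (F \<alpha>))"
    unfolding Lf_def by (simp add: sum_distrib_left)
  finally show ?thesis .
qed

lemma Qf_lin:
  "Qf n X (\<lambda>a b. \<Sum>\<alpha><m. y \<alpha> * F \<alpha> a b) (\<lambda>a b. \<Sum>\<beta><m. y \<beta> * F \<beta> a b)
   = (\<Sum>\<alpha><m. \<Sum>\<beta><m. cnj (y \<alpha>) * y \<beta> * Qf n X (F \<alpha>) (F \<beta>))"
proof -
  define ZZ where "ZZ \<alpha> a c = (\<Sum>b<n. X $$ (a,b) * cnj (F \<alpha> c b))" for \<alpha> a c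
  define YY where "YY \<beta> c a = (\<Sum>d<n. X $$ (c,d) * F \<beta> d a)" for \<beta> c a
  have Z: "(\<Sum>b<n. X $$ (a,b) * cnj (\<Sum>\<alpha><m. y \<alpha> * F \<alpha> c b)) = (\<Sum>\<alpha><m. cnj (y \<alpha>) * ZZ \<alpha> a c)" for a c
  proof -
    have "(\<Sum>b<n. X $$ (a,b) * cnj (\<Sum>\<alpha><m. y \<alpha> * F \<alpha> c b)) = (\<Sum>b<n. \<Sum>\<alpha><m. cnj (y \<alpha>) * (X $$ (a,b) * cnj (F \<alpha> c b)))"
      by (simp add: sum_distrib_left ac_simps)
    also have "\<dots> = (\<Sum>\<alpha><m. \<Sum>b<n. cnj (y \<alpha>) * (X $$ (a,b) * cnj (F \<alpha> c b)))" by (rule sum.swap)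
    finally show ?thesis by (simp add: sum_distrib_left ZZ_def)
  qed
  have Y: "(\<Sum>d<n. X $$ (c,d) * (\<Sum>\<beta><m. y \<beta> * F \<beta> d a)) = (\<Sum>\<beta><m. y \<beta> * YY \<beta> c a)" for a c
  proof -
    have "(\<Sum>d<n. X $$ (c,d) * (\<Sum>\<beta><m. y \<beta> * F \<beta> d a)) = (\<Sum>d<n. \<Sum>\<beta><m. y \<beta> * (X $$ (c,d) * F \<beta> d a))"
      by (simp add: sum_distrib_left ac_simps)
    also have "\<dots> = (\<Sum>\<beta><m. \<Sum>d<n. y \<beta> * (X $$ (c,d) * F \<beta> d a))" by (rule sum.swap)
    finally show ?thesis by (simp add: sum_distrib_left YY_def)
  qed
  have QZ: "Qf n X (F \<alpha>) (F \<beta>) = (\<Sum>a<n. \<Sum>c<n. ZZ \<alpha> a c * YY \<beta> c a)" for \<alpha> \<beta>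
    unfolding Qf_split ZZ_def YY_def ..
  have "Qf n X (\<lambda>a b. \<Sum>\<alpha><m. y \<alpha> * F \<alpha> a b) (\<lambda>a b. \<Sum>\<beta><m. y \<beta> * F \<beta> a b)
     = (\<Sum>a<n. \<Sum>c<n. \<Sum>\<alpha><m. \<Sum>\<beta><m. cnj (y \<alpha>) * y \<beta> * (ZZ \<alpha> a c * YY \<beta> c a))"
    unfolding Qf_split Z Y by (simp only: sum_product) (simp add: ac_simps)
  also have "\<dots> = (\<Sum>\<alpha><m. \<Sum>\<beta><m. \<Sum>a<n. \<Sum>c<n. cnj (y \<alpha>) * y \<beta> * (ZZ \<alpha> a c * YY \<beta> c a))"
    by (rule swap4)
  also have "\<dots> = (\<Sum>\<alpha><m. \<Sum>\<beta><m. cnj (y \<alpha>) * y \<beta> * Qf n X (F \<alpha>) (F \<beta>))"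
    unfolding QZ by (simp add: sum_distrib_left)
  finally show ?thesis .
qed

lemma polarization:
  assumes M: "M \<in> carrier_mat m m" and r: "\<forall>y. Im (qf m M y y) = 0"
  shows "mat_adjoint M = M"
proof (rule eq_matI)
  show "dim_row (mat_adjoint M) = dim_row M" "dim_col (mat_adjoint M) = dim_col M" using M by auto
  fix a b assume "a < dim_row M" "b < dim_col M"
  hence ab: "a < m" "b < m" using M by auto
  have ex: "Im (M $$ (a,a) + s * M $$ (a,b) + cnj s * M $$ (b,a) + s * cnj s * M $$ (b,b)) = 0" for s
    using r[rule_format, of "\<lambda>c. ind a c + s * ind b c"] ab by (simp add: qf_expand qf_ind)
  have ra: "Im (M $$ (a,a)) = 0" using r[rule_format, of "ind a"] ab by (simp add: qf_ind)
  have rb: "Im (M $$ (b,b)) = 0" using r[rule_format, of "ind b"] ab by (simp add: qf_ind)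
  have e1: "Im (M $$ (a,b)) + Im (M $$ (b,a)) = 0" using ex[of 1] ra rb by simp
  have e2: "Re (M $$ (a,b)) - Re (M $$ (b,a)) = 0" using ex[of \<i>] ra rb by simp
  have "M $$ (b,a) = cnj (M $$ (a,b))" using e1 e2 by (simp add: complex_eq_iff)
  thus "mat_adjoint M $$ (a,b) = M $$ (a,b)" using ab M by simp
qed

lemma proj_psd:
  assumes P: "P \<in> carrier_mat n n" and PP: "P * P = P" and h: "mat_adjoint P = P"
  shows "psd_mat n P"
  unfolding psd_mat_def
proof (intro conjI ballI P h)
  fix v :: "complex vec" assume v: "v \<in> carrier_vec n"
  have hE: "P $$ (b,a) = cnj (P $$ (a,b))" if "a < n" "b < n" for a b
  proof -
    have "mat_adjoint P $$ (a,b) = cnj (P $$ (b,a))" using P that by simp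
    thus ?thesis using h by simp
  qed
  define z where "z c = (\<Sum>b<n. P $$ (c,b) * v $ b)" for c
  have PPe: "P $$ (a,b) = (\<Sum>c<n. P $$ (a,c) * P $$ (c,b))" if "a < n" "b < n" for a b
  proof -
    have "P $$ (a,b) = (P * P) $$ (a,b)" using PP by simp
    also have "\<dots> = (\<Sum>c<n. P $$ (a,c) * P $$ (c,b))"
      using P that by (auto simp: scalar_prod_def atLeast0LessThan intro!: sum.cong)
    finally show ?thesis .
  qed
  have "conjugate v \<bullet> (P *\<^sub>v v) = qf n P (($) v) (($) v)" by (rule qf_vec[OF v P])
  also have "\<dots> = (\<Sum>a<n. \<Sum>b<n. \<Sum>c<n. cnj (v $ a) * P $$ (a,c) * P $$ (c,b) * v $ b)"
    unfolding qf_def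
  proof (intro sum.cong refl)
    fix a b assume "a \<in> {..<n}" "b \<in> {..<n}"
    hence e: "P $$ (a,b) = (\<Sum>c<n. P $$ (a,c) * P $$ (c,b))" using PPe by blast
    show "cnj (v $ a) * P $$ (a,b) * v $ b = (\<Sum>c<n. cnj (v $ a) * P $$ (a,c) * P $$ (c,b) * v $ b)"
      unfolding e by (simp add: sum_distrib_left sum_distrib_right ac_simps)
  qed
  also have "\<dots> = (\<Sum>a<n. \<Sum>c<n. \<Sum>b<n. cnj (v $ a) * P $$ (a,c) * P $$ (c,b) * v $ b)"
    by (rule sum.cong[OF refl], rule sum.swap)
  also have "\<dots> = (\<Sum>c<n. \<Sum>a<n. \<Sum>b<n. cnj (v $ a) * P $$ (a,c) * P $$ (c,b) * v $ b)"
    by (rule sum.swap)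
  also have "\<dots> = (\<Sum>c<n. cnj (z c) * z c)"
  proof (rule sum.cong[OF refl])
    fix c assume c: "c \<in> {..<n}"
    have cz: "cnj (z c) = (\<Sum>a<n. cnj (v $ a) * P $$ (a,c))"
      unfolding z_def cnj_sum
    proof (intro sum.cong refl)
      fix a assume "a \<in> {..<n}"
      hence "P $$ (a,c) = cnj (P $$ (c,a))" using hE c by blast
      thus "cnj (P $$ (c,a) * v $ a) = cnj (v $ a) * P $$ (a,c)" by simp
    qed
    have "cnj (z c) * z c = (\<Sum>a<n. cnj (v $ a) * P $$ (a,c)) * (\<Sum>b<n. P $$ (c,b) * v $ b)"
      unfolding cz by (simp only: z_def)
    also have "\<dots> = (\<Sum>a<n. \<Sum>b<n. (cnj (v $ a) * P $$ (a,c)) * (P $$ (c,b) * v $ b))"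
      by (rule sum_product)
    finally show "(\<Sum>a<n. \<Sum>b<n. cnj (v $ a) * P $$ (a,c) * P $$ (c,b) * v $ b) = cnj (z c) * z c"
      by (simp add: ac_simps)
  qed
  also have "\<dots> = complex_of_real (\<Sum>c<n. (cmod (z c))^2)"
    using complex_norm_square by (simp add: mult.commute)
  finally show "\<exists>t::real. t \<ge> 0 \<and> conjugate v \<bullet> (P *\<^sub>v v) = complex_of_real t"
    by (intro exI[of _ "\<Sum>c<n. (cmod (z c))^2"]) (simp add: sum_nonneg)
qed




lemma main_gen:
  assumes Xp: "psd_mat n X" and Eb: "\<forall>\<alpha><m. \<forall>i<d. Eb \<alpha> i \<in> carrier_mat n n"
  shows "loewner_le m (enumA m d Eb X) (of_nat (vec_space.rank n X) \<cdot>\<^sub>m enumB m d Eb X)"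
proof -
  have X: "X \<in> carrier_mat n n" and P: "psdf n X" using psd_mat_psdf[OF Xp] by auto
  have adjX: "mat_adjoint X = X" using Xp by (simp add: psd_mat_def)
  obtain K w where Kr: "K \<le> vec_space.rank n X"
    and dec: "\<forall>a<n. \<forall>b<n. X $$ (a,b) = (\<Sum>k<K. w k a * cnj (w k b))"
    using decomp[OF X P] by blast
  define r where "r = vec_space.rank n X"
  define A where "A = enumA m d Eb X"
  define B where "B = enumB m d Eb X"
  define F where "F \<alpha> i = (\<lambda>a b. Eb \<alpha> i $$ (a,b))" for \<alpha> i
  have Ac: "A \<in> carrier_mat m m" by (simp add: A_def enumA_def)
  have Bc: "B \<in> carrier_mat m m" by (simp add: B_def enumB_def)
  have Ae: "A $$ (\<alpha>,\<beta>) = (\<Sum>i<d. cnj (Lf n X (F \<beta> i)) * Lf n X (F \<alpha> i))" if "\<alpha> < m" "\<beta> < m" for \<alpha> \<beta>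
    unfolding A_def enumA_def using that
    by (auto simp: tr_XadjE[OF X] tr_XEadj[OF X] Eb F_def intro!: sum.cong)
  have Be: "B $$ (\<alpha>,\<beta>) = (\<Sum>i<d. Qf n X (F \<alpha> i) (F \<beta> i))" if "\<alpha> < m" "\<beta> < m" for \<alpha> \<beta>
    unfolding B_def enumB_def using that
    by (auto simp: tr_B[OF X _ _ adjX] Eb F_def intro!: sum.cong)
  define M where "M = of_nat r \<cdot>\<^sub>m B - A"
  have Mc: "M \<in> carrier_mat m m" using Ac Bc unfolding M_def carrier_mat_def by simp
  have Me: "M $$ (\<alpha>,\<beta>) = of_nat r * B $$ (\<alpha>,\<beta>) - A $$ (\<alpha>,\<beta>)" if "\<alpha> < m" "\<beta> < m" for \<alpha> \<beta>
    using that Ac Bc by (simp add: M_def)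
  define G where "G y i a b = (\<Sum>\<alpha><m. y \<alpha> * F \<alpha> i a b)" for y i a b
  have qfM: "qf m M y y = (\<Sum>i<d. of_nat r * Qf n X (G y i) (G y i) - Lf n X (G y i) * cnj (Lf n X (G y i)))" for y
  proof -
    have qB: "(\<Sum>\<alpha><m. \<Sum>\<beta><m. cnj (y \<alpha>) * B $$ (\<alpha>,\<beta>) * y \<beta>) = (\<Sum>i<d. Qf n X (G y i) (G y i))"
    proof -
      have "(\<Sum>\<alpha><m. \<Sum>\<beta><m. cnj (y \<alpha>) * B $$ (\<alpha>,\<beta>) * y \<beta>) = (\<Sum>\<alpha><m. \<Sum>\<beta><m. \<Sum>i<d. cnj (y \<alpha>) * y \<beta> * Qf n X (F \<alpha> i) (F \<beta> i))"
        by (intro sum.cong refl) (simp add: Be sum_distrib_left sum_distrib_right ac_simps)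
      also have "\<dots> = (\<Sum>\<alpha><m. \<Sum>i<d. \<Sum>\<beta><m. cnj (y \<alpha>) * y \<beta> * Qf n X (F \<alpha> i) (F \<beta> i))"
        by (rule sum.cong[OF refl], rule sum.swap)
      also have "\<dots> = (\<Sum>i<d. \<Sum>\<alpha><m. \<Sum>\<beta><m. cnj (y \<alpha>) * y \<beta> * Qf n X (F \<alpha> i) (F \<beta> i))"
        by (rule sum.swap)
      also have "\<dots> = (\<Sum>i<d. Qf n X (G y i) (G y i))"
        unfolding G_def by (rule sum.cong[OF refl], rule Qf_lin[symmetric])
      finally show ?thesis .
    qed
    have qA: "(\<Sum>\<alpha><m. \<Sum>\<beta><m. cnj (y \<alpha>) * A $$ (\<alpha>,\<beta>) * y \<beta>) = (\<Sum>i<d. Lf n X (G y i) * cnj (Lf n X (G y i)))"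
    proof -
      have LG: "Lf n X (G y i) = (\<Sum>\<alpha><m. cnj (y \<alpha>) * Lf n X (F \<alpha> i))" for i
        unfolding G_def by (rule Lf_lin)
      have "(\<Sum>\<alpha><m. \<Sum>\<beta><m. cnj (y \<alpha>) * A $$ (\<alpha>,\<beta>) * y \<beta>) = (\<Sum>\<alpha><m. \<Sum>\<beta><m. \<Sum>i<d. (cnj (y \<alpha>) * Lf n X (F \<alpha> i)) * (y \<beta> * cnj (Lf n X (F \<beta> i))))"
        by (intro sum.cong refl) (simp add: Ae sum_distrib_left sum_distrib_right ac_simps)
      also have "\<dots> = (\<Sum>\<alpha><m. \<Sum>i<d. \<Sum>\<beta><m. (cnj (y \<alpha>) * Lf n X (F \<alpha> i)) * (y \<beta> * cnj (Lf n X (F \<beta> i))))"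
        by (rule sum.cong[OF refl], rule sum.swap)
      also have "\<dots> = (\<Sum>i<d. \<Sum>\<alpha><m. \<Sum>\<beta><m. (cnj (y \<alpha>) * Lf n X (F \<alpha> i)) * (y \<beta> * cnj (Lf n X (F \<beta> i))))"
        by (rule sum.swap)
      also have "\<dots> = (\<Sum>i<d. Lf n X (G y i) * cnj (Lf n X (G y i)))"
        unfolding LG by (simp add: sum_product)
      finally show ?thesis .
    qed
    have "qf m M y y = (\<Sum>\<alpha><m. \<Sum>\<beta><m. of_nat r * (cnj (y \<alpha>) * B $$ (\<alpha>,\<beta>) * y \<beta>) - cnj (y \<alpha>) * A $$ (\<alpha>,\<beta>) * y \<beta>)"
      unfolding qf_def by (intro sum.cong refl) (simp add: Me algebra_simps)
    also have "\<dots> = of_nat r * (\<Sum>\<alpha><m. \<Sum>\<beta><m. cnj (y \<alpha>) * B $$ (\<alpha>,\<beta>) * y \<beta>) - (\<Sum>\<alpha><m. \<Sum>\<beta><m. cnj (y \<alpha>) * A $$ (\<alpha>,\<beta>) * y \<beta>)"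
      by (simp add: sum_subtractf sum_distrib_left)
    also have "\<dots> = (\<Sum>i<d. of_nat r * Qf n X (G y i) (G y i) - Lf n X (G y i) * cnj (Lf n X (G y i)))"
      unfolding qA qB by (simp add: sum_subtractf sum_distrib_left)
    finally show ?thesis .
  qed
  have term_nonneg: "\<exists>t::real. t \<ge> 0 \<and> of_nat r * Qf n X H H - Lf n X H * cnj (Lf n X H) = complex_of_real t" for H
  proof -
    have i0: "Im (Qf n X H H) = 0" and r0: "Re (Qf n X H H) \<ge> 0"
      and le: "(cmod (Lf n X H))^2 \<le> real K * Re (Qf n X H H)" using core[OF dec] by auto
    have "real K * Re (Qf n X H H) \<le> real r * Re (Qf n X H H)"
      using Kr r0 by (intro mult_right_mono) (simp_all add: r_def)
    hence le2: "(cmod (Lf n X H))^2 \<le> real r * Re (Qf n X H H)" using le by linarith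
    have eq: "of_nat r * Qf n X H H - Lf n X H * cnj (Lf n X H) = complex_of_real (real r * Re (Qf n X H H) - (cmod (Lf n X H))^2)"
      using i0 complex_norm_square[of "Lf n X H"] by (simp add: complex_eq_iff)
    show ?thesis using eq le2 by (intro exI[of _ "real r * Re (Qf n X H H) - (cmod (Lf n X H))^2"]) simp
  qed
  have qM: "\<exists>t::real. t \<ge> 0 \<and> qf m M y y = complex_of_real t" for y
  proof -
    have "\<forall>i. \<exists>t::real. t \<ge> 0 \<and> of_nat r * Qf n X (G y i) (G y i) - Lf n X (G y i) * cnj (Lf n X (G y i)) = complex_of_real t"
      using term_nonneg by blast
    hence "\<exists>t. \<forall>i. t i \<ge> 0 \<and> of_nat r * Qf n X (G y i) (G y i) - Lf n X (G y i) * cnj (Lf n X (G y i)) = complex_of_real (t i)"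
      by (rule choice)
    then obtain t where t: "\<And>i. t i \<ge> 0 \<and> of_nat r * Qf n X (G y i) (G y i) - Lf n X (G y i) * cnj (Lf n X (G y i)) = complex_of_real (t i)"
      by blast
    have "qf m M y y = complex_of_real (\<Sum>i<d. t i)" unfolding qfM using t by simp
    moreover have "(\<Sum>i<d. t i) \<ge> 0" using t by (simp add: sum_nonneg)
    ultimately show ?thesis by blast
  qed
  have adjM: "mat_adjoint M = M"
  proof (rule polarization[OF Mc], intro allI)
    fix y obtain t where "qf m M y y = complex_of_real t" using qM by blast
    thus "Im (qf m M y y) = 0" by simp
  qed
  have "psd_mat m M" unfolding psd_mat_def
  proof (intro conjI ballI Mc adjM)
    fix v :: "complex vec" assume v: "v \<in> carrier_vec m"
    show "\<exists>t::real. t \<ge> 0 \<and> conjugate v \<bullet> (M *\<^sub>v v) = complex_of_real t"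
      unfolding qf_vec[OF v Mc] by (rule qM)
  qed
  thus ?thesis unfolding loewner_le_def using Ac Bc by (simp add: M_def A_def B_def r_def)
qed





theorem mainTheorem18:
  fixes G :: "('g, 'b) monoid_scheme" and n :: nat and \<rho> :: "'g \<Rightarrow> complex mat"
    and m d :: nat and Es :: "nat \<Rightarrow> complex mat set"
    and \<phi> :: "nat \<Rightarrow> complex mat \<Rightarrow> complex mat" and E :: "nat \<Rightarrow> complex mat"
  assumes rep: "unitary_rep G n \<rho>"
    and m_pos: "m \<ge> 1"
    and irr: "\<forall>\<alpha><m. irreducible_L G n \<rho> (Es \<alpha>)"
    and orth: "\<forall>\<alpha><m. \<forall>\<beta><m. \<alpha> \<noteq> \<beta> \<longrightarrow> (\<forall>X\<in>Es \<alpha>. \<forall>Y\<in>Es \<beta>. hs X Y = 0)"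
    and isotypic: "span_L n (\<Union>\<alpha><m. Es \<alpha>) = isotypic_L G n \<rho> (Es 0)"
    and phi_lin: "\<forall>\<alpha><m. linear_on_L (Es 0) (\<phi> \<alpha>)"
    and phi_bij: "\<forall>\<alpha><m. bij_betw (\<phi> \<alpha>) (Es 0) (Es \<alpha>)"
    and phi_equiv: "\<forall>\<alpha><m. equivariant_on_L G \<rho> (Es 0) (\<phi> \<alpha>)"
    and phi_isom: "\<forall>\<alpha><m. \<forall>X\<in>Es 0. \<forall>Y\<in>Es 0. hs (\<phi> \<alpha> X) (\<phi> \<alpha> Y) = hs X Y"
    and phi_id: "\<forall>X\<in>Es 0. \<phi> 0 X = X"
    and E_in: "\<forall>i<d. E i \<in> Es 0"
    and E_orthonormal: "\<forall>i<d. \<forall>j<d. hs (E i) (E j) = (if i = j then 1 else 0)"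
    and E_span: "span_L n (E ` {..<d}) = Es 0"
  shows "(\<forall>X. psd_mat n X \<longrightarrow>
            loewner_le m (enumA m d (\<lambda>\<alpha> i. \<phi> \<alpha> (E i)) X)
              (of_nat (vec_space.rank n X) \<cdot>\<^sub>m enumB m d (\<lambda>\<alpha> i. \<phi> \<alpha> (E i)) X))
       \<and> (\<forall>P K. P \<in> carrier_mat n n \<and> P * P = P \<and> mat_adjoint P = P \<and> vec_space.rank n P = K \<longrightarrow>
            loewner_le m (enumA m d (\<lambda>\<alpha> i. \<phi> \<alpha> (E i)) P)
              (of_nat K \<cdot>\<^sub>m enumB m d (\<lambda>\<alpha> i. \<phi> \<alpha> (E i)) P))"
proof -
  have Es0: "Es 0 \<subseteq> carrier_mat n n"
    using irr m_pos unfolding irreducible_L_def subspace_L_def by auto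
  have Eb: "\<forall>\<alpha><m. \<forall>i<d. \<phi> \<alpha> (E i) \<in> carrier_mat n n"
  proof (intro allI impI)
    fix \<alpha> i assume a: "\<alpha> < m" and i: "i < d"
    have "Es \<alpha> \<subseteq> carrier_mat n n" using irr a unfolding irreducible_L_def subspace_L_def by auto
    moreover have "\<phi> \<alpha> (E i) \<in> Es \<alpha>"
      using phi_bij a E_in i by (meson bij_betw_apply)
    ultimately show "\<phi> \<alpha> (E i) \<in> carrier_mat n n" by blast
  qed
  show ?thesis
  proof (intro conjI allI impI)
    fix X assume "psd_mat n X"
    thus "loewner_le m (enumA m d (\<lambda>\<alpha> i. \<phi> \<alpha> (E i)) X)
              (of_nat (vec_space.rank n X) \<cdot>\<^sub>m enumB m d (\<lambda>\<alpha> i. \<phi> \<alpha> (E i)) X)"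
      using main_gen[of n X m d "\<lambda>\<alpha> i. \<phi> \<alpha> (E i)"] Eb by blast
  next
    fix P :: "complex mat" and K :: nat
    assume H: "P \<in> carrier_mat n n \<and> P * P = P \<and> mat_adjoint P = P \<and> vec_space.rank n P = K"
    hence "psd_mat n P" using proj_psd by blast
    hence "loewner_le m (enumA m d (\<lambda>\<alpha> i. \<phi> \<alpha> (E i)) P)
              (of_nat (vec_space.rank n P) \<cdot>\<^sub>m enumB m d (\<lambda>\<alpha> i. \<phi> \<alpha> (E i)) P)"
      using main_gen[of n P m d "\<lambda>\<alpha> i. \<phi> \<alpha> (E i)"] Eb by blast
    thus "loewner_le m (enumA m d (\<lambda>\<alpha> i. \<phi> \<alpha> (E i)) P)
              (of_nat K \<cdot>\<^sub>m enumB m d (\<lambda>\<alpha> i. \<phi> \<alpha> (E i)) P)" using H by simp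
  qed
qed


end
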